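(* Let $n,p,d$ be positive integers with $n>p$, and let $$H=\frac{\det(P(t^{d-1}))}{t^{(d-1)\binom{p-1}{2}}}\frac{(1-t^d)^p(1-t^{d-1})^{n-p}}{(1-t)^n},$$ where $P(t)$ is the $(p-1)\times(p-1)$ matrix whose $(i,j)$ entry is $\sum_{k\ge0}\binom{p-i}{k}\binom{n-1-j}{k}t^k$. Then $H$ is a unimodal polynomial.
   Context: A polynomial $\sum_{k=0}^n a_kt^k$ with non-negative real coefficients is unimodal if there is an integer $N$ with $a_k\le a_{k+1}\le a_N$ for all $k<N$ and $a_N\ge a_k\ge a_{k+1}$ for all $k\ge N$. ($H$ is the Hilbert series of a generic determinantal ideal with parameters $(n,p,d)$.) *)

theory Defs
  imports "HOL-Computational_Algebra.Polynomial" "Jordan_Normal_Form.Determinant"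
begin

text \<open>The (p-1) x (p-1) matrix P(t) with 0-indexed rows/columns: the paper's entry (i,j),
  1-indexed, is sum over k of binom(p-i,k) binom(n-1-j,k) t^k.  All terms with k > p vanish.\<close>
definition Pmat :: "nat \<Rightarrow> nat \<Rightarrow> real poly mat" where
  "Pmat n p = mat (p - 1) (p - 1)
     (\<lambda>(i, j). \<Sum>k\<le>p. monom (of_nat ((p - (i+1)) choose k) * of_nat ((n - 1 - (j+1)) choose k)) k)"

definition unimodal_poly :: "real poly \<Rightarrow> bool" where
  "unimodal_poly q \<longleftrightarrow> (\<forall>k. coeff q k \<ge> 0) \<and>
     (\<exists>N. (\<forall>k<N. coeff q k \<le> coeff q (k+1) \<and> coeff q (k+1) \<le> coeff q N) \<and>
          (\<forall>k\<ge>N. coeff q N \<ge> coeff q k \<and> coeff q k \<ge> coeff q (k+1)))"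

end

theory Submission
  imports Defs "HOL-Computational_Algebra.Formal_Power_Series"
begin


definition umod :: "real poly \<Rightarrow> bool" where
 "umod A \<longleftrightarrow> (\<forall>k. coeff A k \<ge> 0) \<and> (\<exists>N. (\<forall>k<N. coeff A (Suc k) - coeff A k \<ge> 0) \<and> (\<forall>k\<ge>N. coeff A (Suc k) - coeff A k \<le> 0))"

lemma chain_up: assumes "\<forall>k<N. f k \<le> f (Suc k)" "i \<le> j" "j \<le> N" shows "f i \<le> (f j::real)"
  using assms(2,3) proof (induction j)
  case 0 thus ?case by simp
next
  case (Suc j) show ?case
  proof (cases "i = Suc j")
    case True thus ?thesis by simp
  next
    case False with Suc have "f i \<le> f j" by simp
    also have "f j \<le> f (Suc j)" using assms(1) Suc by simp
    finally show ?thesis .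
  qed
qed

lemma chain_down: assumes "\<forall>k\<ge>N. f (Suc k) \<le> f k" "N \<le> i" "i \<le> j" shows "f j \<le> (f i::real)"
  using assms(3) proof (induction j)
  case 0 thus ?case by simp
next
  case (Suc j) show ?case
  proof (cases "i = Suc j")
    case True thus ?thesis by simp
  next
    case False with Suc have "i \<le> j" by simp
    with Suc have "f j \<le> f i" by simp
    moreover have "f (Suc j) \<le> f j" using assms(1,2) \<open>i \<le> j\<close> by simp
    ultimately show ?thesis by linarith
  qed
qed

lemma umod_imp: assumes "umod A" shows "unimodal_poly A"
proof -
  obtain N where nn: "\<forall>k. 0 \<le> coeff A k" and up: "\<forall>k<N. coeff A k \<le> coeff A (Suc k)"
    and dn: "\<forall>k\<ge>N. coeff A (Suc k) \<le> coeff A k" using assms unfolding umod_def by force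
  show ?thesis unfolding unimodal_poly_def
  proof (intro conjI exI allI impI)
    show "0 \<le> coeff A k" for k using nn by simp
    fix k
    { assume "k < N"
      then show "coeff A k \<le> coeff A (k+1)" using up by simp
      show "coeff A (k+1) \<le> coeff A N" using chain_up[OF up, of "k+1" N] \<open>k<N\<close> by simp }
    { assume "N \<le> k"
      then show "coeff A k \<le> coeff A N" using chain_down[OF dn, of N k] by simp
      show "coeff A (k+1) \<le> coeff A k" using dn \<open>N \<le> k\<close> by simp }
  qed
qed

lemma sign_change:
  fixes \<delta> :: "nat \<Rightarrow> real"
  assumes "\<forall>k<M. \<delta> k \<ge> 0" "\<forall>k\<ge>K. \<delta> k \<le> 0" "\<forall>k k'. M \<le> k \<longrightarrow> k \<le> k' \<longrightarrow> k' \<le> K \<longrightarrow> \<delta> k' \<le> \<delta> k"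
  shows "\<exists>N. (\<forall>k<N. \<delta> k \<ge> 0) \<and> (\<forall>k\<ge>N. \<delta> k \<le> 0)"
proof -
  define N where "N = (LEAST k. M \<le> k \<and> \<delta> k \<le> 0)"
  have ex: "M \<le> max M K \<and> \<delta> (max M K) \<le> 0" using assms(2) by simp
  have N1: "M \<le> N \<and> \<delta> N \<le> 0" unfolding N_def by (rule LeastI[where P="\<lambda>k. M \<le> k \<and> \<delta> k \<le> 0", OF ex])
  have N2: "k < N \<Longrightarrow> \<not> (M \<le> k \<and> \<delta> k \<le> 0)" for k unfolding N_def using not_less_Least by blast
  show ?thesis
  proof (intro exI conjI allI impI)
    fix k assume "k < N" then show "\<delta> k \<ge> 0" using N2[of k] assms(1) by (cases "k < M") auto
  next
    fix k assume "N \<le> k" show "\<delta> k \<le> 0"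
    proof (cases "K \<le> k")
      case True then show ?thesis using assms(2) by simp
    next
      case False then have "\<delta> k \<le> \<delta> N" using assms(3) N1 \<open>N \<le> k\<close> by simp
      then show ?thesis using N1 by simp
    qed
  qed
qed

definition geo :: "nat \<Rightarrow> real poly" where "geo l = (\<Sum>i<l. monom 1 i)"

lemma geo_mult: "[:1,-1:] * geo l = 1 - monom 1 l"
  unfolding geo_def by (induction l) (simp_all add: algebra_simps monom_Suc)

lemma coeff_diff1: "coeff ([:1,-1:] * X) (Suc k) = coeff X (Suc k) - coeff (X::real poly) k"
  by simp

lemma coeff_mult_nonneg: assumes "\<forall>k. coeff A k \<ge> 0" "\<forall>k. coeff B k \<ge> 0"
  shows "coeff (A * B) k \<ge> (0::real)"
  unfolding coeff_mult using assms by (intro sum_nonneg mult_nonneg_nonneg) auto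

lemma geo_nonneg: "coeff (geo l) k \<ge> 0"
  unfolding geo_def coeff_sum by (intro sum_nonneg) (simp add: coeff_monom)

lemma umod_geo:
  assumes A: "umod A" and l: "1 \<le> l"
  shows "umod (A * geo l)"
proof -
  obtain M where nn: "\<forall>k. 0 \<le> coeff A k" and up0: "\<forall>k<M. coeff A (Suc k) - coeff A k \<ge> 0"
    and dn0: "\<forall>k\<ge>M. coeff A (Suc k) - coeff A k \<le> 0" using A unfolding umod_def by force
  have up: "\<forall>k<M. coeff A k \<le> coeff A (Suc k)" using up0 by auto
  have dn: "\<forall>k\<ge>M. coeff A (Suc k) \<le> coeff A k" using dn0 by auto
  define a where "a = coeff A"
  define \<delta> where "\<delta> k = a (Suc k) - (if Suc k < l then 0 else a (Suc k - l))" for k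
  have d: "coeff (A * geo l) (Suc k) - coeff (A * geo l) k = \<delta> k" for k
  proof -
    have "coeff (A * geo l) (Suc k) - coeff (A * geo l) k = coeff ([:1,-1:] * (A * geo l)) (Suc k)"
      by (rule coeff_diff1[symmetric])
    also have "[:1,-1:] * (A * geo l) = A - monom 1 l * A"
      by (metis (no_types, lifting) geo_mult mult.commute mult.left_commute right_diff_distrib' mult.right_neutral)
    finally show ?thesis unfolding \<delta>_def a_def by (simp add: coeff_monom_mult)
  qed
  have "\<exists>N. (\<forall>k<N. \<delta> k \<ge> 0) \<and> (\<forall>k\<ge>N. \<delta> k \<le> 0)"
  proof (rule sign_change[where M=M and K="M + l - 1"], safe)
    fix k assume "k < M"
    show "0 \<le> \<delta> k"
    proof (cases "Suc k < l")
      case True then show ?thesis using nn unfolding \<delta>_def a_def by simp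
    next
      case False
      have "a (Suc k - l) \<le> a (Suc k)" unfolding a_def
        by (rule chain_up[OF up]) (use \<open>k<M\<close> in auto)
      then show ?thesis using False unfolding \<delta>_def by simp
    qed
  next
    fix k assume k: "M + l - 1 \<le> k"
    have "a (Suc k) \<le> a (Suc k - l)" unfolding a_def
      by (rule chain_down[OF dn]) (use k l in auto)
    then show "\<delta> k \<le> 0" using k l unfolding \<delta>_def by auto
  next
    fix k k' assume h: "M \<le> k" "k \<le> k'" "k' \<le> M + l - 1"
    have 1: "a (Suc k') \<le> a (Suc k)" unfolding a_def
      by (rule chain_down[OF dn]) (use h in auto)
    have 2: "(if Suc k < l then 0 else a (Suc k - l)) \<le> (if Suc k' < l then 0 else a (Suc k' - l))"
    proof (cases "Suc k < l")
      case True then show ?thesis using nn unfolding a_def by simp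
    next
      case False
      have "a (Suc k - l) \<le> a (Suc k' - l)" unfolding a_def
        by (rule chain_up[OF up]) (use h l False in auto)
      then show ?thesis using False h by auto
    qed
    show "\<delta> k' \<le> \<delta> k" unfolding \<delta>_def using 1 2 by linarith
  qed
  then show ?thesis unfolding umod_def d
    using coeff_mult_nonneg[of A "geo l"] nn geo_nonneg by blast
qed

lemma umod_geo_pow:
  assumes A: "umod A" and l: "1 \<le> l"
  shows "umod (A * geo l ^ j)"
proof (induction j)
  case 0 then show ?case using A by simp
next
  case (Suc j)
  show ?case using umod_geo[OF Suc l] by (simp add: ac_simps)
qed




definition hc :: "nat \<Rightarrow> nat \<Rightarrow> nat \<Rightarrow> real" where
  "hc s q j = (if j \<le> q then real ((s+j) choose j) else 0)"

definition hy :: "nat \<Rightarrow> nat \<Rightarrow> nat \<Rightarrow> real poly" where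
  "hy s q e = (\<Sum>k\<le>q. monom (real ((s+k) choose k)) (k*e))"

lemma coeff_hy: assumes "0 < e"
  shows "coeff (hy s q e) m = (if e dvd m then hc s q (m div e) else 0)"
proof -
  have "coeff (hy s q e) m = (\<Sum>k\<le>q. if k = m div e \<and> e dvd m then real ((s+k) choose k) else 0)"
    unfolding hy_def coeff_sum coeff_monom
  proof (intro sum.cong refl)
    fix k show "(if k * e = m then real ((s+k) choose k) else 0) = (if k = m div e \<and> e dvd m then real ((s+k) choose k) else 0)"
      using assms by (auto simp: dvd_def)
  qed
  also have "\<dots> = (if e dvd m then hc s q (m div e) else 0)"
    by (auto simp: hc_def sum.delta' if_distrib cong: if_cong)
  finally show ?thesis .
qed

lemma hc_mono: "j \<le> q \<Longrightarrow> hc s q (j - 1) \<le> hc s q j"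
proof (cases j)
  case (Suc j')
  assume "j \<le> q"
  have "(s + j') choose j' \<le> (s + Suc j') choose Suc j'"
    by (simp add: binomial_Suc_Suc[symmetric, of "s+j'" j', simplified])
  then show ?thesis using Suc \<open>j \<le> q\<close> by (simp add: hc_def)
qed simp

lemma hc_nonneg: "hc s q j \<ge> 0" by (simp add: hc_def)

lemma umod_base: assumes e: "0 < e" shows "umod (hy s q e * geo e)"
proof -
  define A where "A = hy s q e"
  have nnA: "\<forall>k. coeff A k \<ge> 0" unfolding A_def using coeff_hy[OF e] hc_nonneg by simp
  define \<delta> where "\<delta> k = coeff A (Suc k) - (if Suc k < e then 0 else coeff A (Suc k - e))" for k
  have d: "coeff (A * geo e) (Suc k) - coeff (A * geo e) k = \<delta> k" for k
  proof -
    have "coeff (A * geo e) (Suc k) - coeff (A * geo e) k = coeff ([:1,-1:] * (A * geo e)) (Suc k)"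
      by (rule coeff_diff1[symmetric])
    also have "[:1,-1:] * (A * geo e) = A - monom 1 e * A"
      by (metis (no_types, lifting) geo_mult mult.commute mult.left_commute right_diff_distrib' mult.right_neutral)
    finally show ?thesis unfolding \<delta>_def by (simp add: coeff_monom_mult)
  qed
  have dform: "\<delta> k = (if e dvd Suc k then hc s q (Suc k div e) - hc s q (Suc k div e - 1) else 0)" for k
  proof (cases "e dvd Suc k")
    case True
    then obtain j where j: "Suc k = j * e" by (auto simp: dvd_def mult.commute)
    then have "j \<ge> 1" by (cases j) auto
    then have "\<not> Suc k < e" using j e by (metis le_eq_less_or_eq less_not_refl2 mult_1 mult_le_mono1 not_less)
    moreover have "Suc k - e = (j - 1) * e" using j by (simp add: diff_mult_distrib)
    ultimately show ?thesis using True j e unfolding \<delta>_def A_def by (simp add: coeff_hy)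
  next
    case False
    have "\<not> e dvd (Suc k - e)" if "\<not> Suc k < e"
      using False that by (metis dvd_add_triv_right_iff le_add_diff_inverse2 not_less)
    then show ?thesis using False unfolding \<delta>_def A_def by (auto simp: coeff_hy[OF e])
  qed
  have "\<exists>N. (\<forall>k<N. \<delta> k \<ge> 0) \<and> (\<forall>k\<ge>N. \<delta> k \<le> 0)"
  proof (intro exI[of _ "(q+1)*e - 1"] conjI allI impI)
    fix k assume k: "k < (q+1)*e - 1"
    show "\<delta> k \<ge> 0"
    proof (cases "e dvd Suc k")
      case True
      then obtain j where j: "Suc k = j * e" by (auto simp: dvd_def mult.commute)
      have "j < q + 1" using k j e by (metis Suc_lessI add_lessD1 diff_Suc_1 less_diff_conv mult_less_cancel2 not_less_eq)
      then show ?thesis using dform[of k] True j e hc_mono[of j q s] by simp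
    qed (simp add: dform)
  next
    fix k assume k: "(q+1)*e - 1 \<le> k"
    show "\<delta> k \<le> 0"
    proof (cases "e dvd Suc k")
      case True
      then obtain j where j: "Suc k = j * e" by (auto simp: dvd_def mult.commute)
      have "(q+1)*e \<le> j * e" using k j e by linarith
      then have "q + 1 \<le> j" using e mult_le_cancel2 by blast
      then show ?thesis using dform[of k] True j e hc_nonneg[of s q "j-1"] by (simp add: hc_def)
    qed (simp add: dform)
  qed
  then show ?thesis unfolding umod_def d A_def[symmetric]
    using coeff_mult_nonneg[of A "geo e"] nnA geo_nonneg by blast
qed




lemma sum_window:
  fixes q a b :: nat
  assumes "b < q"
  shows "(\<Sum>l<q. if a \<le> l \<and> l \<le> b then g l else 0) = (if a \<le> b then (\<Sum>u\<le>b-a. g (a+u)) else (0::'a::comm_monoid_add))"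
proof -
  have "(\<Sum>l<q. if a \<le> l \<and> l \<le> b then g l else 0) = (\<Sum>l\<in>{l\<in>{..<q}. a \<le> l \<and> l \<le> b}. g l)"
    by (rule sum.inter_filter[symmetric]) simp
  also have "{l\<in>{..<q}. a \<le> l \<and> l \<le> b} = {a..b}" using assms by auto
  also have "(\<Sum>l\<in>{a..b}. g l) = (if a \<le> b then (\<Sum>u\<le>b-a. g (a+u)) else 0)"
    by (cases "a \<le> b") (simp_all add: sum.atLeastAtMost_shift_0 atLeast0AtMost comp_def)
  finally show ?thesis .
qed

lemma R1: assumes "m < q"
  shows "(\<Sum>l<q. if m \<le> l then (c choose (l-m)) * (\<beta> choose (q-1-l)) else 0) = (c + \<beta>) choose (q-1-m)"
proof -
  have "(\<Sum>l<q. if m \<le> l then (c choose (l-m)) * (\<beta> choose (q-1-l)) else 0)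
      = (\<Sum>l<q. if m \<le> l \<and> l \<le> q-1 then (c choose (l-m)) * (\<beta> choose (q-1-l)) else 0)"
    by (intro sum.cong) auto
  also have "\<dots> = (\<Sum>u\<le>q-1-m. (c choose u) * (\<beta> choose (q-1-m-u)))"
    using assms by (subst sum_window) auto
  also have "\<dots> = (c + \<beta>) choose (q-1-m)" by (rule vandermonde)
  finally show ?thesis .
qed

lemma R2: assumes "m < q" "\<beta> < q"
  shows "(\<Sum>l<q. if m \<le> l+1 then (c choose (l+1-m)) * (\<beta> choose (q-1-l)) else 0) = (c + \<beta>) choose (q-m)"
proof (cases m)
  case (Suc m')
  have "(\<Sum>l<q. if m \<le> l+1 then (c choose (l+1-m)) * (\<beta> choose (q-1-l)) else 0)
      = (\<Sum>l<q. if m' \<le> l \<and> l \<le> q-1 then (c choose (l+1-m)) * (\<beta> choose (q-1-l)) else 0)"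
    using Suc by (intro sum.cong) auto
  also have "\<dots> = (\<Sum>u\<le>q-m. (c choose u) * (\<beta> choose (q-m-u)))"
    using assms Suc by (subst sum_window) auto
  also have "\<dots> = (c + \<beta>) choose (q-m)" by (rule vandermonde)
  finally show ?thesis .
next
  case 0
  obtain q' where q: "q = Suc q'" using assms by (cases q) auto
  have "(c + \<beta>) choose q = (\<Sum>k\<le>q. (c choose k) * (\<beta> choose (q-k)))" by (rule vandermonde[symmetric])
  also have "\<dots> = (\<beta> choose q) + (\<Sum>k<q. (c choose Suc k) * (\<beta> choose (q - Suc k)))"
    by (subst sum.atMost_shift) simp
  also have "\<beta> choose q = 0" using assms by simp
  finally show ?thesis using 0 by simp
qed

definition kap :: "nat \<Rightarrow> nat \<Rightarrow> real" where
  "kap c r = (-1)^r * real ((c + r - 1) choose r)"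

lemma kap_g: assumes "1 \<le> c" shows "kap c r = ((- real c) gchoose r)"
proof -
  have "real (c + r - 1) = real c + real r - 1" using assms by simp
  then show ?thesis unfolding kap_def gbinomial_minus binomial_gbinomial by simp
qed

lemma conv: assumes "1 \<le> c"
  shows "(\<Sum>r\<le>N. real (c choose r) * kap c (N-r)) = (if N = 0 then 1 else 0)"
proof -
  have "(\<Sum>r\<le>N. real (c choose r) * kap c (N-r)) = (\<Sum>r\<in>{0..N}. (real c gchoose r) * ((- real c) gchoose (N-r)))"
    using assms by (simp add: kap_g binomial_gbinomial atLeast0AtMost)
  also have "\<dots> = (real c + - real c) gchoose N" by (rule gbinomial_Vandermonde)
  finally show ?thesis by (simp add: gbinomial_0_left)
qed

lemma S1: assumes "1 \<le> c" "l' < q"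
  shows "(\<Sum>l<q. if m \<le> l \<and> l \<le> l' then real (c choose (l-m)) * kap c (l'-l) else 0) = (if m = l' then 1 else 0)"
proof -
  have "(\<Sum>l<q. if m \<le> l \<and> l \<le> l' then real (c choose (l-m)) * kap c (l'-l) else 0)
     = (if m \<le> l' then (\<Sum>u\<le>l'-m. real (c choose u) * kap c (l'-m-u)) else 0)"
    using assms by (subst sum_window) auto
  also have "\<dots> = (if m = l' then 1 else 0)" using conv[OF assms(1), of "l'-m"] by auto
  finally show ?thesis .
qed

lemma S2: assumes "1 \<le> c" "l' < q"
  shows "(\<Sum>l<q. if m \<le> l+1 \<and> l \<le> l' then real (c choose (l+1-m)) * kap c (l'-l) else 0)
     = (if m = l'+1 then 1 else 0) - (if m = 0 then kap c (l'+1) else 0)"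
proof (cases m)
  case (Suc m')
  have "(\<Sum>l<q. if m \<le> l+1 \<and> l \<le> l' then real (c choose (l+1-m)) * kap c (l'-l) else 0)
     = (\<Sum>l<q. if m' \<le> l \<and> l \<le> l' then real (c choose (l+1-m)) * kap c (l'-l) else 0)"
    using Suc by (intro sum.cong) auto
  also have "\<dots> = (if m' \<le> l' then (\<Sum>u\<le>l'-m'. real (c choose u) * kap c (l'-m'-u)) else 0)"
    using assms Suc by (subst sum_window) auto
  also have "\<dots> = (if m = l'+1 then 1 else 0)" using conv[OF assms(1), of "l'-m'"] Suc by auto
  finally show ?thesis using Suc by simp
next
  case 0
  have "(\<Sum>l<q. if m \<le> l+1 \<and> l \<le> l' then real (c choose (l+1-m)) * kap c (l'-l) else 0)
     = (\<Sum>l<q. if 0 \<le> l \<and> l \<le> l' then real (c choose (Suc l)) * kap c (l'-l) else 0)"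
    using 0 by (intro sum.cong) auto
  also have "\<dots> = (\<Sum>u\<le>l'. real (c choose Suc u) * kap c (l'-u))"
    using assms by (subst sum_window) auto
  also have "\<dots> = (\<Sum>r\<le>Suc l'. real (c choose r) * kap c (Suc l'-r)) - kap c (Suc l')"
    by (subst sum.atMost_Suc_shift) simp
  also have "\<dots> = - kap c (Suc l')" using conv[OF assms(1), of "Suc l'"] by simp
  finally show ?thesis using 0 by simp
qed




definition Em :: "nat \<Rightarrow> nat \<Rightarrow> real poly mat" where
  "Em q c = mat q q (\<lambda>(m,l). monom (if m \<le> l then real (c choose (l-m)) else 0) 0
      + monom (if m \<le> l+1 then real (c choose (l+1-m)) else 0) 1)"
definition Btm :: "nat \<Rightarrow> real poly mat" where
  "Btm q = mat q q (\<lambda>(l,j). monom (real ((q-1-j) choose (q-1-l))) 0)"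
definition Ym :: "nat \<Rightarrow> nat \<Rightarrow> real poly mat" where
  "Ym q c = mat q q (\<lambda>(m,j). monom (real ((c + (q-1-j)) choose (q-1-m))) 0
      + monom (real ((c + (q-1-j)) choose (q-m))) 1)"

lemma EB: "Em q c * Btm q = Ym q c"
proof (rule eq_matI)
  fix m j assume m: "m < dim_row (Ym q c)" and j: "j < dim_col (Ym q c)"
  then have m: "m < q" and j: "j < q" by (auto simp: Ym_def)
  define \<beta> where "\<beta> = q - 1 - j"
  have b: "\<beta> < q" using j unfolding \<beta>_def by simp
  have "(Em q c * Btm q) $$ (m,j) = (\<Sum>l<q. Em q c $$ (m,l) * Btm q $$ (l,j))"
    using m j by (simp add: Em_def Btm_def scalar_prod_def atLeast0LessThan)
  also have "\<dots> = (\<Sum>l<q. monom (if m \<le> l then real ((c choose (l-m)) * (\<beta> choose (q-1-l))) else 0) 0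
      + monom (if m \<le> l+1 then real ((c choose (l+1-m)) * (\<beta> choose (q-1-l))) else 0) 1)"
    using m j by (intro sum.cong refl) (simp add: Em_def Btm_def \<beta>_def distrib_right mult_monom)
  also have "\<dots> = monom (\<Sum>l<q. if m \<le> l then real ((c choose (l-m)) * (\<beta> choose (q-1-l))) else 0) 0
      + monom (\<Sum>l<q. if m \<le> l+1 then real ((c choose (l+1-m)) * (\<beta> choose (q-1-l))) else 0) 1"
    by (simp add: sum.distrib monom_sum)
  also have "(\<Sum>l<q. if m \<le> l then real ((c choose (l-m)) * (\<beta> choose (q-1-l))) else 0)
     = real (\<Sum>l<q. if m \<le> l then (c choose (l-m)) * (\<beta> choose (q-1-l)) else 0)"
    by (simp add: of_nat_sum if_distrib cong: if_cong)
  also have "\<dots> = real ((c + \<beta>) choose (q-1-m))" using R1[OF m] by simp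
  also have "(\<Sum>l<q. if m \<le> l+1 then real ((c choose (l+1-m)) * (\<beta> choose (q-1-l))) else 0)
     = real (\<Sum>l<q. if m \<le> l+1 then (c choose (l+1-m)) * (\<beta> choose (q-1-l)) else 0)"
    by (simp add: of_nat_sum if_distrib cong: if_cong)
  also have "\<dots> = real ((c + \<beta>) choose (q-m))" using R2[OF m b] by simp
  finally show "(Em q c * Btm q) $$ (m,j) = Ym q c $$ (m,j)"
    using m j by (simp add: Ym_def \<beta>_def)
qed (auto simp: Em_def Btm_def Ym_def)




definition Am :: "nat \<Rightarrow> real poly mat" where
  "Am q = mat q q (\<lambda>(i,m). monom (real ((q-1-i) choose (q-1-m))) 0)"
definition Dm :: "nat \<Rightarrow> real poly mat" where
  "Dm q = mat q q (\<lambda>(i,m). if i = m then monom 1 (q-1-i) else 0)"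
definition DYm :: "nat \<Rightarrow> nat \<Rightarrow> real poly mat" where
  "DYm q c = mat q q (\<lambda>(m,j). monom (real ((c + (q-1-j)) choose (q-1-m))) (q-1-m)
      + monom (real ((c + (q-1-j)) choose (q-m))) (q-m))"
definition P0 :: "nat \<Rightarrow> nat \<Rightarrow> real poly mat" where
  "P0 q c = mat q q (\<lambda>(i,j). \<Sum>k\<le>q+1. monom (real ((q-i) choose k) * real ((c+(q-1-j)) choose k)) k)"

lemma dims[simp]: "dim_row (Ym q c) = q" "dim_col (Ym q c) = q" "dim_row (Dm q) = q" "dim_col (Dm q) = q"
  "dim_row (Am q) = q" "dim_col (Am q) = q" "dim_row (DYm q c) = q" "dim_col (DYm q c) = q"
  "dim_row (P0 q c) = q" "dim_col (P0 q c) = q" "dim_row (Em q c) = q" "dim_col (Em q c) = q"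
  "dim_row (Btm q) = q" "dim_col (Btm q) = q"
  by (auto simp: Ym_def Dm_def Am_def DYm_def P0_def Em_def Btm_def)

lemma sum_delta_mult: "m < (q::nat) \<Longrightarrow> (\<Sum>l<q. (if m = l then a else 0) * f l) = a * (f m :: 'a::comm_semiring_1)"
proof -
  assume "m < q"
  have "(\<Sum>l<q. (if m = l then a else 0) * f l) = (\<Sum>l<q. if m = l then a * f l else 0)" by (intro sum.cong) auto
  then show ?thesis using \<open>m<q\<close> by simp
qed

lemma DY: "Dm q * Ym q c = DYm q c"
proof (rule eq_matI)
  fix m j assume m: "m < dim_row (DYm q c)" and j: "j < dim_col (DYm q c)"
  then have m: "m < q" and j: "j < q" by auto
  have "(Dm q * Ym q c) $$ (m,j) = (\<Sum>l<q. (if m = l then monom 1 (q-1-m) else 0) * Ym q c $$ (l,j))"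
    using m j apply (simp add: scalar_prod_def atLeast0LessThan)
    by (intro sum.cong refl) (simp add: Dm_def)
  also have "\<dots> = monom 1 (q-1-m) * Ym q c $$ (m,j)"
    using m by (rule sum_delta_mult)
  also have "\<dots> = DYm q c $$ (m,j)"
    using m j by (simp add: Ym_def DYm_def distrib_left mult_monom Suc_diff_Suc)
  finally show "(Dm q * Ym q c) $$ (m,j) = DYm q c $$ (m,j)" .
qed auto

lemma pascal_sum:
  assumes "\<alpha> < q"
  shows "(\<Sum>k\<le>q+1. monom (real (Suc \<alpha> choose k) * real (\<beta> choose k)) k :: real poly)
    = (\<Sum>u<q. monom (real (\<alpha> choose u) * real (\<beta> choose u)) u
         + monom (real (\<alpha> choose u) * real (\<beta> choose Suc u)) (Suc u))"
proof -
  define F where "F k = (monom (real (\<alpha> choose k) * real (\<beta> choose k)) k :: real poly)" for k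
  define G where "G u = (monom (real (\<alpha> choose u) * real (\<beta> choose Suc u)) (Suc u) :: real poly)" for u
  have "(\<Sum>k\<le>q+1. monom (real (Suc \<alpha> choose k) * real (\<beta> choose k)) k :: real poly)
      = monom (real (Suc \<alpha> choose 0) * real (\<beta> choose 0)) 0 + (\<Sum>u\<le>q. monom (real (Suc \<alpha> choose Suc u) * real (\<beta> choose Suc u)) (Suc u))"
    unfolding Suc_eq_plus1[symmetric] by (rule sum.atMost_Suc_shift)
  also have "\<dots> = F 0 + (\<Sum>u\<le>q. G u + F (Suc u))"
    unfolding F_def G_def by (simp add: distrib_right add_monom)
  also have "\<dots> = (\<Sum>u\<le>q. G u) + (F 0 + (\<Sum>u\<le>q. F (Suc u)))"
    by (simp add: sum.distrib)
  also have "F 0 + (\<Sum>u\<le>q. F (Suc u)) = (\<Sum>k\<le>Suc q. F k)"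
    by (rule sum.atMost_Suc_shift[symmetric])
  also have "(\<Sum>u\<le>q. G u) = (\<Sum>u<q. G u)"
    using assms by (intro sum.mono_neutral_right) (auto simp: G_def)
  also have "(\<Sum>k\<le>Suc q. F k) = (\<Sum>u<q. F u)"
    using assms by (intro sum.mono_neutral_right) (auto simp: F_def)
  finally show ?thesis by (simp add: F_def G_def sum.distrib)
qed

lemma ADY: "Am q * DYm q c = P0 q c"
proof (rule eq_matI)
  fix i j assume i: "i < dim_row (P0 q c)" and j: "j < dim_col (P0 q c)"
  then have i: "i < q" and j: "j < q" by auto
  define \<alpha> where "\<alpha> = q - 1 - i"
  define \<beta> where "\<beta> = c + (q - 1 - j)"
  define g where "g m = (monom (real (\<alpha> choose (q-1-m)) * real (\<beta> choose (q-1-m))) (q-1-m)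
      + monom (real (\<alpha> choose (q-1-m)) * real (\<beta> choose (q-m))) (q-m) :: real poly)" for m
  have "(Am q * DYm q c) $$ (i,j) = (\<Sum>m<q. g m)"
    using i j apply (simp add: scalar_prod_def atLeast0LessThan)
    by (intro sum.cong refl) (simp add: Am_def DYm_def g_def \<alpha>_def \<beta>_def distrib_left mult_monom)
  also have "\<dots> = (\<Sum>u<q. g (q - Suc u))" by (rule sum.nat_diff_reindex[symmetric])
  also have "\<dots> = (\<Sum>u<q. monom (real (\<alpha> choose u) * real (\<beta> choose u)) u
         + monom (real (\<alpha> choose u) * real (\<beta> choose Suc u)) (Suc u))"
    by (intro sum.cong refl) (simp add: g_def Suc_diff_Suc)
  also have "\<dots> = (\<Sum>k\<le>q+1. monom (real (Suc \<alpha> choose k) * real (\<beta> choose k)) k)"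
    using i by (intro pascal_sum[symmetric]) (simp add: \<alpha>_def)
  also have "\<dots> = P0 q c $$ (i,j)"
    using i j by (simp add: P0_def \<alpha>_def \<beta>_def Suc_diff_Suc)
  finally show "(Am q * DYm q c) $$ (i,j) = P0 q c $$ (i,j)" .
qed auto




lemma carr[simp]: "Am q \<in> carrier_mat q q" "Btm q \<in> carrier_mat q q" "Dm q \<in> carrier_mat q q"
  "Em q c \<in> carrier_mat q q" "Ym q c \<in> carrier_mat q q" "DYm q c \<in> carrier_mat q q" "P0 q c \<in> carrier_mat q q"
  by (simp_all add: Am_def Btm_def Dm_def Em_def Ym_def DYm_def P0_def)

lemma prod_list_ones: "prod_list (map (\<lambda>i. (1::'a::monoid_mult)) xs) = 1"
  by (induction xs) auto

lemma det_Am: "det (Am q) = 1"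
proof -
  have "det (Am q) = prod_list (diag_mat (Am q))"
    by (rule det_upper_triangular[of _ q]) (auto simp: upper_triangular_def Am_def Am_def)
  also have "diag_mat (Am q) = map (\<lambda>i. 1) [0..<q]"
    by (auto simp: diag_mat_def Am_def)
  finally show ?thesis by (simp add: prod_list_ones)
qed

lemma det_Btm: "det (Btm q) = 1"
proof -
  have "det (Btm q) = prod_list (diag_mat (Btm q))"
    by (rule det_lower_triangular[of q]) (auto simp: Btm_def)
  also have "diag_mat (Btm q) = map (\<lambda>i. 1) [0..<q]"
    by (auto simp: diag_mat_def Btm_def)
  finally show ?thesis by (simp add: prod_list_ones)
qed

lemma prod_monom_lessThan: "(\<Prod>i<q. monom (1::real) i) = monom 1 (q choose 2)"
proof (induction q)
  case (Suc q)
  have "Suc q choose 2 = (q choose 2) + q" by (simp add: numeral_2_eq_2)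
  then show ?case using Suc by (simp add: mult_monom)
qed (simp add: numeral_2_eq_2 monom_0 one_pCons)

lemma det_Dm: "det (Dm q) = monom 1 (q choose 2)"
proof -
  have "det (Dm q) = prod_list (diag_mat (Dm q))"
    by (rule det_upper_triangular[of _ q]) (auto simp: upper_triangular_def Dm_def)
  also have "diag_mat (Dm q) = map (\<lambda>i. monom 1 (q - Suc i)) [0..<q]"
    by (auto simp: diag_mat_def Dm_def)
  also have "prod_list (map (\<lambda>i. monom 1 (q - Suc i)) [0..<q]) = (\<Prod>i<q. monom (1::real) (q - Suc i))"
    by (simp add: prod.distinct_set_conv_list[symmetric] atLeast0LessThan)
  also have "\<dots> = (\<Prod>i<q. monom 1 i)" by (rule prod.nat_diff_reindex)
  finally show ?thesis by (simp add: prod_monom_lessThan)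
qed

lemma det_P0: "det (P0 q c) = monom 1 (q choose 2) * det (Em q c)"
proof -
  have "P0 q c = Am q * (Dm q * (Em q c * Btm q))" by (simp add: EB DY ADY)
  moreover have "det (Am q * (Dm q * (Em q c * Btm q))) = det (Am q) * det (Dm q * (Em q c * Btm q))"
    by (rule det_mult[of _ q]) (auto intro!: carrier_matI)
  moreover have "det (Dm q * (Em q c * Btm q)) = det (Dm q) * det (Em q c * Btm q)"
    by (rule det_mult[of _ q]) (auto intro!: carrier_matI)
  moreover have "det (Em q c * Btm q) = det (Em q c) * det (Btm q)"
    by (rule det_mult[of _ q]) (auto intro!: carrier_matI)
  ultimately show ?thesis by (simp add: det_Am det_Btm det_Dm)
qed




definition Km :: "nat \<Rightarrow> nat \<Rightarrow> real poly mat" where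
  "Km q c = mat q q (\<lambda>(l,l'). if l \<le> l' then monom (kap c (l'-l)) 0 else 0)"
definition Wm :: "nat \<Rightarrow> real poly mat" where
  "Wm q = mat q q (\<lambda>(l,l'). if l' \<le> l then monom ((-1)^(l-l')) (l-l') else 0)"
definition Zm :: "nat \<Rightarrow> nat \<Rightarrow> real poly mat" where
  "Zm q c = mat q q (\<lambda>(m,l'). monom (if m = l' then 1 else 0) 0
     + monom ((if m = l'+1 then 1 else 0) - (if m = 0 then kap c (l'+1) else 0)) 1)"
definition Fm :: "nat \<Rightarrow> nat \<Rightarrow> real poly mat" where
  "Fm q c = mat q q (\<lambda>(m,l'). if m = 0 then (Zm q c * Wm q) $$ (0,l') else if m = l' then 1 else 0)"

lemma dims2[simp]: "dim_row (Km q c) = q" "dim_col (Km q c) = q" "dim_row (Wm q) = q" "dim_col (Wm q) = q"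
  "dim_row (Zm q c) = q" "dim_col (Zm q c) = q" "dim_row (Fm q c) = q" "dim_col (Fm q c) = q"
  by (auto simp: Km_def Wm_def Zm_def Fm_def)

lemma carr2[simp]: "Km q c \<in> carrier_mat q q" "Wm q \<in> carrier_mat q q" "Zm q c \<in> carrier_mat q q" "Fm q c \<in> carrier_mat q q"
  by (simp_all add: Km_def Wm_def Zm_def Fm_def)

lemma EK: assumes c: "1 \<le> c" shows "Em q c * Km q c = Zm q c"
proof (rule eq_matI)
  fix m l' assume m: "m < dim_row (Zm q c)" and l': "l' < dim_col (Zm q c)"
  then have m: "m < q" and l': "l' < q" by auto
  have "(Em q c * Km q c) $$ (m,l') = (\<Sum>l<q. monom (if m \<le> l \<and> l \<le> l' then real (c choose (l-m)) * kap c (l'-l) else 0) 0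
      + monom (if m \<le> l+1 \<and> l \<le> l' then real (c choose (l+1-m)) * kap c (l'-l) else 0) 1)"
    using m l' apply (simp add: scalar_prod_def atLeast0LessThan)
    by (intro sum.cong refl) (auto simp: Em_def Km_def distrib_right mult_monom)
  also have "\<dots> = monom (\<Sum>l<q. if m \<le> l \<and> l \<le> l' then real (c choose (l-m)) * kap c (l'-l) else 0) 0
      + monom (\<Sum>l<q. if m \<le> l+1 \<and> l \<le> l' then real (c choose (l+1-m)) * kap c (l'-l) else 0) 1"
    by (simp add: sum.distrib monom_sum)
  also have "\<dots> = monom (if m = l' then 1 else 0) 0 + monom ((if m = l'+1 then 1 else 0) - (if m = 0 then kap c (l'+1) else 0)) 1"
    by (simp only: S1[OF c l'] S2[OF c l'])
  also have "\<dots> = Zm q c $$ (m,l')"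
    using m l' by (simp add: Zm_def)
  finally show "(Em q c * Km q c) $$ (m,l') = Zm q c $$ (m,l')" .
qed auto

lemma ZW_row: assumes m: "0 < m" "m < q" and l': "l' < q"
  shows "(Zm q c * Wm q) $$ (m,l') = (if m = l' then 1 else 0)"
proof -
  have "(Zm q c * Wm q) $$ (m,l') = (\<Sum>l<q. (if m = l then Wm q $$ (l,l') else 0) + (if l = m - 1 then monom 1 1 * Wm q $$ (l,l') else 0))"
    using m l' apply (simp add: scalar_prod_def atLeast0LessThan)
    by (intro sum.cong refl) (auto simp: Zm_def distrib_right)
  also have "\<dots> = Wm q $$ (m,l') + monom 1 1 * Wm q $$ (m-1,l')"
    using m by (simp add: sum.distrib)
  also have "\<dots> = (if m = l' then 1 else 0)"
  proof (cases "l' < m")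
    case True
    then obtain x where x: "m - l' = Suc x" "m - 1 - l' = x" by (metis Suc_diff_Suc diff_Suc_1 diff_commute)
    have "Wm q $$ (m,l') + monom 1 1 * Wm q $$ (m-1,l') = monom ((-1)^Suc x) (Suc x) + monom ((-1)^x) (Suc x)"
      using True m l' x by (simp add: Wm_def mult_monom)
    also have "\<dots> = 0" by (simp add: add_monom)
    finally show ?thesis using True by simp
  next
    case False
    then show ?thesis using m l' by (auto simp: Wm_def monom_0 one_pCons)
  qed
  finally show ?thesis .
qed

lemma det_Km: "det (Km q c) = 1"
proof -
  have "det (Km q c) = prod_list (diag_mat (Km q c))"
    by (rule det_upper_triangular[of _ q]) (auto simp: upper_triangular_def Km_def)
  also have "diag_mat (Km q c) = map (\<lambda>i. 1) [0..<q]"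
    by (auto simp: diag_mat_def Km_def kap_def monom_0 one_pCons)
  finally show ?thesis by (simp add: prod_list_ones)
qed

lemma det_Wm: "det (Wm q) = 1"
proof -
  have "det (Wm q) = prod_list (diag_mat (Wm q))"
    by (rule det_lower_triangular[of q]) (auto simp: Wm_def)
  also have "diag_mat (Wm q) = map (\<lambda>i. 1) [0..<q]"
    by (auto simp: diag_mat_def Wm_def monom_0 one_pCons)
  finally show ?thesis by (simp add: prod_list_ones)
qed

lemma ZW: assumes "0 < q" shows "Zm q c * Wm q = Fm q c"
proof (rule eq_matI)
  fix m l' assume "m < dim_row (Fm q c)" "l' < dim_col (Fm q c)"
  then have m: "m < q" and l': "l' < q" by auto
  show "(Zm q c * Wm q) $$ (m,l') = Fm q c $$ (m,l')"
  proof (cases "m = 0")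
    case True then show ?thesis using m l' by (simp add: Fm_def)
  next
    case False then show ?thesis using m l' ZW_row[of m q l' c] by (simp add: Fm_def)
  qed
qed auto

definition hpoly :: "nat \<Rightarrow> nat \<Rightarrow> real poly" where
  "hpoly s q = (\<Sum>k\<le>q. monom (real ((s+k) choose k)) k)"

lemma F00: assumes c: "1 \<le> c" and q: "0 < q"
  shows "(Zm q c * Wm q) $$ (0,0) = hpoly (c-1) q"
proof -
  have "(Zm q c * Wm q) $$ (0,0) = (\<Sum>l<q. monom (if l = 0 then 1 else 0) l + monom (real ((c + l) choose Suc l)) (Suc l))"
    using q apply (simp add: scalar_prod_def atLeast0LessThan)
    apply (intro sum.cong refl)
    using c by (auto simp: Zm_def Wm_def distrib_right mult_monom kap_def)
  also have "\<dots> = (\<Sum>l<q. if l = 0 then (1::real poly) else 0) + (\<Sum>l<q. monom (real ((c + l) choose Suc l)) (Suc l))"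
    unfolding sum.distrib by (intro arg_cong2[where f="(+)"] sum.cong refl) (auto simp: monom_0 one_pCons)
  also have "\<dots> = 1 + (\<Sum>l<q. monom (real ((c + l) choose Suc l)) (Suc l))"
    using q by simp
  also have "\<dots> = hpoly (c-1) q"
    unfolding hpoly_def using c by (subst sum.atMost_shift) (simp add: monom_0 one_pCons)
  finally show ?thesis .
qed

lemma det_Fm: assumes c: "1 \<le> c" and q: "0 < q"
  shows "det (Fm q c) = hpoly (c-1) q"
proof -
  have "det (Fm q c) = prod_list (diag_mat (Fm q c))"
    by (rule det_upper_triangular[of _ q]) (auto simp: upper_triangular_def Fm_def)
  also have "diag_mat (Fm q c) = (Zm q c * Wm q) $$ (0,0) # map (\<lambda>i. 1) [1..<q]"
    using q by (auto simp: diag_mat_def Fm_def upt_conv_Cons)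
  finally show ?thesis using F00[OF c q] by (simp add: prod_list_ones)
qed

lemma det_Em: assumes c: "1 \<le> c"
  shows "det (Em q c) = hpoly (c-1) q"
proof (cases "q = 0")
  case True
  have "det (Em q c) = prod_list (diag_mat (Em q c))"
    by (rule det_upper_triangular[of _ q]) (use True in \<open>auto simp: upper_triangular_def\<close>)
  then show ?thesis using True by (simp add: diag_mat_def hpoly_def monom_0 one_pCons)
next
  case False
  have "det (Fm q c) = det (Em q c * Km q c * Wm q)" using ZW[of q c] EK[OF c] False by simp
  also have "\<dots> = det (Em q c * Km q c) * det (Wm q)"
    by (rule det_mult[of _ q]) (auto intro!: carrier_matI)
  also have "det (Em q c * Km q c) = det (Em q c) * det (Km q c)"
    by (rule det_mult[of _ q]) (auto intro!: carrier_matI)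
  finally show ?thesis using det_Fm[OF c] False det_Km det_Wm by simp
qed


lemma pcompose_monom_monom: "pcompose (monom a k) (monom (1::real) e) = monom a (k*e)"
proof (induction k)
  case 0 then show ?case by (simp add: monom_0)
next
  case (Suc k)
  have "pcompose (monom a (Suc k)) (monom 1 e) = monom 1 e * pcompose (monom a k) (monom 1 e)"
    by (simp add: monom_Suc pcompose_pCons)
  also have "\<dots> = monom a (Suc k * e)" using Suc by (simp add: mult_monom)
  finally show ?case .
qed

lemma sigma_hom: "comm_ring_hom (\<lambda>x::real poly. x \<circ>\<^sub>p monom 1 e)"
  by unfold_locales (simp_all add: pcompose_add pcompose_mult pcompose_1)

lemma Pmat_eq: assumes "0 < p" "p < n" shows "Pmat n p = P0 (p-1) (n-p)"
proof (rule eq_matI)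
  fix i j assume "i < dim_row (P0 (p-1) (n-p))" "j < dim_col (P0 (p-1) (n-p))"
  then have i: "i < p-1" and j: "j < p-1" by auto
  have 1: "p - (i+1) = p - 1 - i" by simp
  have 2: "n - 1 - (j+1) = n - p + (p - 1 - 1 - j)" using i j assms by simp
  have 3: "p - 1 + 1 = p" using assms by simp
  show "Pmat n p $$ (i,j) = P0 (p-1) (n-p) $$ (i,j)"
    using i j unfolding Pmat_def P0_def by (simp only: index_mat(1) 1 2 3 split)
qed (auto simp: Pmat_def)

lemma unimodal_zero: "unimodal_poly 0"
  unfolding unimodal_poly_def by auto

theorem lemma9:
  fixes n p d :: nat
  assumes "0 < n" "0 < p" "0 < d" "p < n"
  shows "\<exists>H :: real poly.
    H * monom 1 ((d - 1) * ((p - 1) choose 2)) * [:1, -1:] ^ n =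
      det (map_mat (\<lambda>e. e \<circ>\<^sub>p monom 1 (d - 1)) (Pmat n p))
      * (1 - monom 1 d) ^ p * (1 - monom 1 (d - 1)) ^ (n - p)
    \<and> unimodal_poly H"
proof -
  define q where "q = p - 1"
  define c where "c = n - p"
  define e where "e = d - 1"
  have c1: "1 \<le> c" using assms unfolding c_def by simp
  define s where "s = c - 1"
  have n: "n = p + c" using assms unfolding c_def by simp
  have detP: "det (Pmat n p) = monom 1 (q choose 2) * hpoly s q"
    using Pmat_eq[OF assms(2,4)] det_P0 det_Em[OF c1] unfolding q_def c_def s_def by simp
  have hh: "pcompose (hpoly s q) (monom 1 e) = hy s q e"
    unfolding hpoly_def hy_def by (simp add: pcompose_sum pcompose_monom_monom)
  have detM: "det (map_mat (\<lambda>x. x \<circ>\<^sub>p monom 1 e) (Pmat n p)) = monom 1 ((q choose 2) * e) * hy s q e"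
    using comm_ring_hom.hom_det[OF sigma_hom[of e], of "Pmat n p"]
    by (simp add: detP pcompose_mult pcompose_monom_monom hh)
  define H where "H = hy s q e * geo e ^ c * geo d ^ p"
  have pw: "[:1, -1:] ^ n = ([:1, -1:] ^ p * [:1, -1:] ^ c :: real poly)"
    unfolding n by (rule power_add)
  have "det (map_mat (\<lambda>x. x \<circ>\<^sub>p monom 1 e) (Pmat n p)) * (1 - monom 1 d) ^ p * (1 - monom 1 e) ^ c
     = monom 1 ((q choose 2) * e) * hy s q e * ([:1,-1:] * geo d) ^ p * ([:1,-1:] * geo e) ^ c"
    by (simp only: detM geo_mult)
  also have "\<dots> = H * monom 1 (e * (q choose 2)) * ([:1, -1:] ^ p * [:1, -1:] ^ c)"
    unfolding H_def by (simp only: power_mult_distrib) (simp only: ac_simps)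
  finally have eq: "H * monom 1 (e * (q choose 2)) * [:1, -1:] ^ n =
      det (map_mat (\<lambda>x. x \<circ>\<^sub>p monom 1 e) (Pmat n p)) * (1 - monom 1 d) ^ p * (1 - monom 1 e) ^ c"
    unfolding pw by simp
  have uni: "unimodal_poly H"
  proof (cases "e = 0")
    case True
    then have "H = 0" using c1 unfolding H_def geo_def by (simp add: zero_power)
    then show ?thesis using unimodal_zero by simp
  next
    case False
    have "umod (hy s q e * geo e * geo e ^ (c-1) * geo d ^ p)"
      using False assms(3) by (intro umod_geo_pow umod_base) auto
    moreover have "hy s q e * geo e * geo e ^ (c-1) * geo d ^ p = H"
      unfolding H_def using c1 by (simp add: power_eq_if[of _ c] ac_simps)
    ultimately show ?thesis using umod_imp by simp
  qed
  show ?thesis using eq uni unfolding e_def q_def c_def by blast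
qed

end
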